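(* Let $\mathcal{R}$ be a finite set of $K$ records, $n\in\mathbb{N}$, $\theta\in(0,1)$, $p$ a pmf on $\mathcal{R}$, and $\mathcal{F}:\mathcal{H}^n\times\mathcal{H}^n\to[0,\infty)$ a distortion measure. Then there exists a database sanitizing mechanism $(\mathbb{W}(\cdot|\underline a):\underline a\in\mathcal{R}^n)$ such that (i) $\mathbb{W}(\cdot|\underline a)=\mathbb{W}(\cdot|\underline{\tilde a})$ whenever $\mathtt{h}(\underline a)=\mathtt{h}(\underline{\tilde a})$; (ii) $\mathbb{W}(\underline b|\underline a)/\mathbb{W}(\underline b|\underline{\hat a})\in[\theta,1/\theta]$ for every pair of neighboring databases $\underline a,\underline{\hat a}$ and every database $\underline b$; and (iii) $D^n(\mathbb{W})\le D^n(\mathbb{U})$ for every $\theta$-DP database sanitizing mechanism $\mathbb{U}$.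
   Context: A database is $\underline r=(r_1,\dots,r_n)\in\mathcal{R}^n$; its histogram $\mathtt{h}(\underline r)\in\mathcal{H}^n:=\{(h_1,\dots,h_K)\in\mathbb{Z}^K:h_k\ge0,\sum_kh_k=n\}$ has $k$-th entry the number of $i$ with $r_i=a_k$, where $\mathcal{R}=\{a_1,\dots,a_K\}$. Databases are neighboring if they differ in exactly one entry. A database sanitizing mechanism assigns to each $\underline r\in\mathcal{R}^n$ a pmf $\mathbb{W}(\cdot|\underline r)$ on $\mathcal{R}^n$; it is $\theta$-DP if $\theta\mathbb{W}(\underline s|\underline r)\le\mathbb{W}(\underline s|\underline{\hat r})\le\theta^{-1}\mathbb{W}(\underline s|\underline r)$ for all neighboring $\underline r,\underline{\hat r}$ and all $\underline s$. Its expected distortion is $D^n(\mathbb{W})=\sum_{\underline r,\underline s\in\mathcal{R}^n}\prod_{i=1}^n p(r_i)\,\mathbb{W}(\underline s|\underline r)\,\mathcal{F}(\mathtt{h}(\underline r),\mathtt{h}(\underline s))$. *)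

theory Defs
  imports Complex_Main
begin

text \<open>Records form a finite type 'r (so K = CARD('r)). A database of size n is a
list of records of length n; entry i is the record at index i < n.\<close>

definition databases :: "nat \<Rightarrow> 'r list set" where
  "databases n = {xs. length xs = n}"

definition hist :: "'r list \<Rightarrow> ('r \<Rightarrow> nat)" where
  "hist xs = (\<lambda>a. count_list xs a)"

definition hist_space :: "nat \<Rightarrow> ('r::finite \<Rightarrow> nat) set" where
  "hist_space n = {h. (\<Sum>a\<in>UNIV. h a) = n}"

definition neighboring :: "nat \<Rightarrow> 'r list \<Rightarrow> 'r list \<Rightarrow> bool" where
  "neighboring n r r' \<longleftrightarrow> length r = n \<and> length r' = n \<and>
     card {i. i < n \<and> r ! i \<noteq> r' ! i} = 1"

text \<open>A database sanitizing mechanism: W s r = W(s | r), a pmf on R^n for each r in R^n.\<close>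
definition mechanism :: "nat \<Rightarrow> ('r list \<Rightarrow> 'r list \<Rightarrow> real) \<Rightarrow> bool" where
  "mechanism n W \<longleftrightarrow> (\<forall>r\<in>databases n.
      (\<forall>s\<in>databases n. 0 \<le> W s r) \<and> (\<Sum>s\<in>databases n. W s r) = 1)"

definition is_DP :: "nat \<Rightarrow> real \<Rightarrow> ('r list \<Rightarrow> 'r list \<Rightarrow> real) \<Rightarrow> bool" where
  "is_DP n \<theta> W \<longleftrightarrow> (\<forall>r r' s. neighboring n r r' \<longrightarrow> s \<in> databases n \<longrightarrow>
      \<theta> * W s r \<le> W s r' \<and> W s r' \<le> W s r / \<theta>)"

definition distortion :: "nat \<Rightarrow> ('r \<Rightarrow> real) \<Rightarrow> (('r \<Rightarrow> nat) \<Rightarrow> ('r \<Rightarrow> nat) \<Rightarrow> real)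
    \<Rightarrow> ('r list \<Rightarrow> 'r list \<Rightarrow> real) \<Rightarrow> real" where
  "distortion n p F W = (\<Sum>r\<in>databases n. \<Sum>s\<in>databases n.
      (\<Prod>i<n. p (r ! i)) * W s r * F (hist r) (hist s))"

end

theory Submission
  imports Defs "HOL-Combinatorics.Permutations" "HOL-Analysis.Analysis"
begin

lemma hist_pl:
  assumes "\<sigma> permutes {..<length r}"
  shows "hist (permute_list \<sigma> r) = hist r"
proof -
  have m: "mset (permute_list \<sigma> r) = mset r" using assms by (rule mset_permute_list)
  show ?thesis
  proof
    fix x
    have "count (mset (permute_list \<sigma> r)) x = count (mset r) x" using m by simp
    then show "hist (permute_list \<sigma> r) x = hist r x" by (simp add: hist_def count_mset)
  qed
qed

lemma P_pl:
  assumes "\<sigma> permutes {..<n}" "length r = n"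
  shows "(\<Prod>i<n. p (permute_list \<sigma> r ! i)) = (\<Prod>i<n. p (r ! i))"
proof -
  have "(\<Prod>i<n. p (r ! i)) = (\<Prod>i\<in>{..<n}. ((\<lambda>i. p (r ! i)) \<circ> \<sigma>) i)"
    using prod.permute[OF assms(1)] by simp
  also have "\<dots> = (\<Prod>i<n. p (permute_list \<sigma> r ! i))"
    using assms by (intro prod.cong) (auto simp: permute_list_nth)
  finally show ?thesis by simp
qed

lemma pl_inv1:
  assumes "\<sigma> permutes {..<length r}"
  shows "permute_list \<sigma> (permute_list (inv \<sigma>) r) = r"
proof -
  have "permute_list (inv \<sigma> \<circ> \<sigma>) r = permute_list \<sigma> (permute_list (inv \<sigma>) r)"
    using assms by (rule permute_list_compose)
  moreover have "inv \<sigma> \<circ> \<sigma> = id" using assms by (rule permutes_inv_o(2))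
  ultimately show ?thesis by simp
qed

lemma pl_inv2:
  assumes "\<sigma> permutes {..<length r}"
  shows "permute_list (inv \<sigma>) (permute_list \<sigma> r) = r"
proof -
  have i: "inv \<sigma> permutes {..<length r}" using assms by (rule permutes_inv)
  have "permute_list (\<sigma> \<circ> inv \<sigma>) r = permute_list (inv \<sigma>) (permute_list \<sigma> r)"
    using i by (rule permute_list_compose)
  moreover have "\<sigma> \<circ> inv \<sigma> = id" using assms by (rule permutes_inv_o(1))
  ultimately show ?thesis by simp
qed

lemma neighboring_pl:
  assumes "neighboring n a a'" "\<sigma> permutes {..<n}"
  shows "neighboring n (permute_list \<sigma> a) (permute_list \<sigma> a')"
proof -
  have la: "length a = n" "length a' = n" using assms(1) unfolding neighboring_def by auto
  have plt: "\<And>x. x < n \<Longrightarrow> \<sigma> x < n" using permutes_in_image[OF assms(2)] by simp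
  have "\<sigma> ` {i. i < n \<and> permute_list \<sigma> a ! i \<noteq> permute_list \<sigma> a' ! i} = {i. i < n \<and> a ! i \<noteq> a' ! i}"
  proof
    show "\<sigma> ` {i. i < n \<and> permute_list \<sigma> a ! i \<noteq> permute_list \<sigma> a' ! i} \<subseteq> {i. i < n \<and> a ! i \<noteq> a' ! i}"
      using assms(2) la plt by (auto simp: permute_list_nth)
  next
    show "{i. i < n \<and> a ! i \<noteq> a' ! i} \<subseteq> \<sigma> ` {i. i < n \<and> permute_list \<sigma> a ! i \<noteq> permute_list \<sigma> a' ! i}"
    proof
      fix j assume j: "j \<in> {i. i < n \<and> a ! i \<noteq> a' ! i}"
      have "inv \<sigma> j < n" using j permutes_in_image[OF permutes_inv[OF assms(2)]] by simp
      moreover have "\<sigma> (inv \<sigma> j) = j" using assms(2) by (meson permutes_inverses(1))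
      ultimately show "j \<in> \<sigma> ` {i. i < n \<and> permute_list \<sigma> a ! i \<noteq> permute_list \<sigma> a' ! i}"
        using j la assms(2) by (auto simp: permute_list_nth intro!: image_eqI[of _ _ "inv \<sigma> j"])
    qed
  qed
  moreover have "inj \<sigma>" using assms(2) permutes_inj by blast
  ultimately have "card {i. i < n \<and> permute_list \<sigma> a ! i \<noteq> permute_list \<sigma> a' ! i} = card {i. i < n \<and> a ! i \<noteq> a' ! i}"
    using card_image[OF inj_on_subset[OF \<open>inj \<sigma>\<close> subset_UNIV], of "{i. i < n \<and> permute_list \<sigma> a ! i \<noteq> permute_list \<sigma> a' ! i}"] by simp
  then show ?thesis using assms(1) unfolding neighboring_def by simp
qed

lemma finite_databases: "finite (databases n :: 'r::finite list set)"
proof -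
  have "databases n = {xs::'r list. set xs \<subseteq> UNIV \<and> length xs = n}" by (auto simp: databases_def)
  then show ?thesis using finite_lists_length_eq[of "UNIV::'r set" n] by simp
qed

lemma hist_mset:
  assumes "hist a = hist a'"
  shows "mset a = mset a'"
proof (rule multiset_eqI)
  fix x
  have "hist a x = hist a' x" using assms by simp
  then show "count (mset a) x = count (mset a') x" by (simp add: hist_def count_mset)
qed

lemma symmetrize:
  fixes W0 :: "'r::finite list \<Rightarrow> 'r list \<Rightarrow> real" and \<theta> :: real
  assumes th: "0 < \<theta>" and mech: "mechanism n W0"
    and dp: "\<forall>a a' b. neighboring n a a' \<longrightarrow> b \<in> databases n \<longrightarrow> \<theta> * W0 b a' \<le> W0 b a \<and> W0 b a \<le> W0 b a' / \<theta>"
  defines "W \<equiv> \<lambda>b a. (\<Sum>\<sigma>\<in>{\<sigma>. \<sigma> permutes {..<n}}. W0 b (permute_list \<sigma> a)) / real (fact n)"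
  shows "mechanism n W"
    and "\<forall>a\<in>databases n. \<forall>a'\<in>databases n. hist a = hist a' \<longrightarrow> (\<forall>b\<in>databases n. W b a = W b a')"
    and "\<forall>a a' b. neighboring n a a' \<longrightarrow> b \<in> databases n \<longrightarrow> \<theta> * W b a' \<le> W b a \<and> W b a \<le> W b a' / \<theta>"
    and "distortion n p F W = distortion n p F W0"
proof -
  define P where "P = {\<sigma>. \<sigma> permutes {..<n}}"
  define N where "N = real (fact n)"
  have finP: "finite P" unfolding P_def by (simp add: finite_permutations)
  have cardP: "real (card P) = N" unfolding P_def N_def using card_permutations[of "{..<n}" n] by simp
  have Npos: "N > 0" unfolding N_def by simp
  have Wd: "W = (\<lambda>b a. (\<Sum>\<sigma>\<in>P. W0 b (permute_list \<sigma> a)) / N)" unfolding W_def P_def N_def by simp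
  have finD: "finite (databases n :: 'r list set)" by (rule finite_databases)
  have plD: "permute_list \<sigma> a \<in> databases n" if "a \<in> databases n" for \<sigma> and a :: "'r list"
    using that by (simp add: databases_def)
  show "mechanism n W"
    unfolding mechanism_def
  proof (intro ballI conjI)
    fix r s :: "'r list" assume r: "r \<in> databases n" and s: "s \<in> databases n"
    show "0 \<le> W s r" unfolding Wd using mech s plD[OF r] Npos
      by (auto simp: mechanism_def intro!: divide_nonneg_pos sum_nonneg)
  next
    fix r :: "'r list" assume r: "r \<in> databases n"
    have "(\<Sum>s\<in>databases n. W s r) = (\<Sum>\<sigma>\<in>P. \<Sum>s\<in>databases n. W0 s (permute_list \<sigma> r)) / N"
      unfolding Wd by (simp add: sum_divide_distrib[symmetric] sum.swap[of _ P])
    also have "\<dots> = (\<Sum>\<sigma>\<in>P. 1) / N"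
      using mech plD[OF r] by (simp add: mechanism_def)
    also have "\<dots> = 1" using cardP Npos by simp
    finally show "(\<Sum>s\<in>databases n. W s r) = 1" .
  qed
  show "\<forall>a\<in>databases n. \<forall>a'\<in>databases n. hist a = hist a' \<longrightarrow> (\<forall>b\<in>databases n. W b a = W b a')"
  proof (intro ballI impI)
    fix a a' b :: "'r list" assume a: "a \<in> databases n" and a': "a' \<in> databases n" and h: "hist a = hist a'"
      and b: "b \<in> databases n"
    have la: "length a = n" "length a' = n" using a a' by (auto simp: databases_def)
    obtain \<tau> where \<tau>: "\<tau> permutes {..<length a'}" "permute_list \<tau> a' = a"
      using mset_eq_permutation[OF hist_mset[OF h]] by blast
    have \<tau>n: "\<tau> permutes {..<n}" using \<tau> la by simp
    have "(\<Sum>\<sigma>\<in>P. W0 b (permute_list \<sigma> a)) = (\<Sum>\<sigma>\<in>P. W0 b (permute_list (\<tau> \<circ> \<sigma>) a'))"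
      using \<tau> la by (intro sum.cong) (auto simp: P_def permute_list_compose)
    also have "\<dots> = (\<Sum>\<sigma>\<in>P. W0 b (permute_list \<sigma> a'))"
    proof (rule sum.reindex_bij_witness[of _ "\<lambda>\<sigma>. inv \<tau> \<circ> \<sigma>" "\<lambda>\<sigma>. \<tau> \<circ> \<sigma>"])
      fix \<sigma> assume "\<sigma> \<in> P"
      show "inv \<tau> \<circ> (\<tau> \<circ> \<sigma>) = \<sigma>" using permutes_inv_o(2)[OF \<tau>n] by (simp add: o_assoc)
      show "\<tau> \<circ> \<sigma> \<in> P" using \<open>\<sigma> \<in> P\<close> \<tau>n by (simp add: P_def permutes_compose)
      show "W0 b (permute_list (\<tau> \<circ> \<sigma>) a') = W0 b (permute_list (\<tau> \<circ> \<sigma>) a')" ..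
    next
      fix \<sigma> assume "\<sigma> \<in> P"
      show "\<tau> \<circ> (inv \<tau> \<circ> \<sigma>) = \<sigma>" using permutes_inv_o(1)[OF \<tau>n] by (simp add: o_assoc)
      show "inv \<tau> \<circ> \<sigma> \<in> P" using \<open>\<sigma> \<in> P\<close> permutes_inv[OF \<tau>n] by (simp add: P_def permutes_compose)
    qed
    finally show "W b a = W b a'" unfolding Wd by simp
  qed
  show "\<forall>a a' b. neighboring n a a' \<longrightarrow> b \<in> databases n \<longrightarrow> \<theta> * W b a' \<le> W b a \<and> W b a \<le> W b a' / \<theta>"
  proof (intro allI impI conjI)
    fix a a' b :: "'r list" assume nb: "neighboring n a a'" and b: "b \<in> databases n"
    have each: "\<theta> * W0 b (permute_list \<sigma> a') \<le> W0 b (permute_list \<sigma> a) \<and>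
       W0 b (permute_list \<sigma> a) \<le> W0 b (permute_list \<sigma> a') / \<theta>" if "\<sigma> \<in> P" for \<sigma>
      using dp neighboring_pl[OF nb, of \<sigma>] that b by (auto simp: P_def)
    have "\<theta> * (\<Sum>\<sigma>\<in>P. W0 b (permute_list \<sigma> a')) \<le> (\<Sum>\<sigma>\<in>P. W0 b (permute_list \<sigma> a))"
      unfolding sum_distrib_left using each by (intro sum_mono) auto
    then show "\<theta> * W b a' \<le> W b a" unfolding Wd using Npos
      by (simp add: divide_right_mono mult.commute times_divide_eq_right)
    have "(\<Sum>\<sigma>\<in>P. W0 b (permute_list \<sigma> a)) \<le> (\<Sum>\<sigma>\<in>P. W0 b (permute_list \<sigma> a')) / \<theta>"
      unfolding sum_divide_distrib using each by (intro sum_mono) auto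
    then have "(\<Sum>\<sigma>\<in>P. W0 b (permute_list \<sigma> a)) / N \<le> ((\<Sum>\<sigma>\<in>P. W0 b (permute_list \<sigma> a')) / \<theta>) / N"
      using Npos by (intro divide_right_mono) auto
    then show "W b a \<le> W b a' / \<theta>" unfolding Wd
      by (simp add: divide_divide_eq_left mult.commute)
  qed
  define G where "G = (\<lambda>r s. (\<Prod>i<n. p (r ! i)) * F (hist r) (hist s))"
  have dG: "distortion n p F V = (\<Sum>r\<in>databases n. \<Sum>s\<in>databases n. V s r * G r s)" for V
    unfolding distortion_def G_def by (simp add: algebra_simps)
  have Ginv: "G (permute_list \<sigma> r) s = G r s" if "\<sigma> \<in> P" "r \<in> databases n" for \<sigma> r s
    using that P_pl[of \<sigma> n r p] hist_pl[of \<sigma> r] by (auto simp: G_def P_def databases_def)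
  have one: "(\<Sum>r\<in>databases n. \<Sum>s\<in>databases n. W0 s (permute_list \<sigma> r) * G r s) = distortion n p F W0"
    if \<sigma>: "\<sigma> \<in> P" for \<sigma>
  proof -
    have \<sigma>n: "\<sigma> permutes {..<n}" using \<sigma> by (simp add: P_def)
    have "(\<Sum>r\<in>databases n. \<Sum>s\<in>databases n. W0 s (permute_list \<sigma> r) * G r s)
        = (\<Sum>r\<in>databases n. \<Sum>s\<in>databases n. W0 s (permute_list \<sigma> r) * G (permute_list \<sigma> r) s)"
      using Ginv[OF \<sigma>] by simp
    also have "\<dots> = (\<Sum>r\<in>databases n. \<Sum>s\<in>databases n. W0 s r * G r s)"
    proof (rule sum.reindex_bij_witness[of _ "permute_list (inv \<sigma>)" "permute_list \<sigma>"])
      fix r :: "'r list" assume r: "r \<in> databases n"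
      then have lr: "length r = n" by (simp add: databases_def)
      show "permute_list (inv \<sigma>) (permute_list \<sigma> r) = r" using pl_inv2[of \<sigma> r] \<sigma>n lr by simp
      show "permute_list \<sigma> r \<in> databases n" using plD[OF r] .
      show "(\<Sum>s\<in>databases n. W0 s (permute_list \<sigma> r) * G (permute_list \<sigma> r) s) = (\<Sum>s\<in>databases n. W0 s (permute_list \<sigma> r) * G (permute_list \<sigma> r) s)" ..
    next
      fix r :: "'r list" assume r: "r \<in> databases n"
      then have lr: "length r = n" by (simp add: databases_def)
      show "permute_list \<sigma> (permute_list (inv \<sigma>) r) = r" using pl_inv1[of \<sigma> r] \<sigma>n lr by simp
      show "permute_list (inv \<sigma>) r \<in> databases n" using plD[OF r] .
    qed
    finally show ?thesis unfolding dG .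
  qed
  have "distortion n p F W = (\<Sum>\<sigma>\<in>P. \<Sum>r\<in>databases n. \<Sum>s\<in>databases n. W0 s (permute_list \<sigma> r) * G r s) / N"
    unfolding dG Wd
    by (simp add: sum_divide_distrib[symmetric] sum_distrib_right sum.swap[of _ P] times_divide_eq_left)
  also have "\<dots> = (\<Sum>\<sigma>\<in>P. distortion n p F W0) / N" using one by simp
  also have "\<dots> = distortion n p F W0" using cardP Npos by simp
  finally show "distortion n p F W = distortion n p F W0" .
qed

lemma closed_Collect_all_imp:
  "(\<And>i. Q i \<Longrightarrow> closed {x. P i x}) \<Longrightarrow> closed {x. \<forall>i. Q i \<longrightarrow> P i x}"
proof -
  assume h: "\<And>i. Q i \<Longrightarrow> closed {x. P i x}"
  have "{x. \<forall>i. Q i \<longrightarrow> P i x} = (\<Inter>i\<in>{i. Q i}. {x. P i x})" by auto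
  then show ?thesis using h by (auto intro!: closed_INT)
qed

lemma neighboring_sym: "neighboring n a a' \<Longrightarrow> neighboring n a' a"
proof -
  assume h: "neighboring n a a'"
  have "{i. i < n \<and> a ! i \<noteq> a' ! i} = {i. i < n \<and> a' ! i \<noteq> a ! i}" by auto
  then show ?thesis using h unfolding neighboring_def by simp
qed

lemma neighboring_db: "neighboring n a a' \<Longrightarrow> a \<in> databases n \<and> a' \<in> databases n"
  unfolding neighboring_def databases_def by simp

lemma cont_eval: "continuous_on UNIV (\<lambda>V::('a \<Rightarrow> real). V x)"
  by simp

lemma exists_opt:
  fixes \<theta> :: real and p :: "'r::finite \<Rightarrow> real"
    and F :: "('r \<Rightarrow> nat) \<Rightarrow> ('r \<Rightarrow> nat) \<Rightarrow> real"
  assumes th0: "0 < \<theta>" and th1: "\<theta> < 1"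
  shows "\<exists>W0. mechanism n W0 \<and>
     (\<forall>a a' b. neighboring n a a' \<longrightarrow> b \<in> databases n \<longrightarrow> \<theta> * W0 b a' \<le> W0 b a \<and> W0 b a \<le> W0 b a' / \<theta>)
   \<and> (\<forall>U. mechanism n U \<and> is_DP n \<theta> U \<longrightarrow> distortion n p F W0 \<le> distortion n p F U)"
proof -
  define D where "D = (databases n :: 'r list set)"
  have finD: "finite D" unfolding D_def by (rule finite_databases)
  have neD: "D \<noteq> {}" unfolding D_def databases_def
    by (metis (mono_tags) empty_iff length_replicate mem_Collect_eq)
  have cD: "card D > 0" using finD neD by (simp add: card_gt_0_iff)
  define S where "S = (\<lambda>x::'r list \<times> 'r list. if x \<in> D \<times> D then {0..1::real} else {0})"
  define K where "K = PiE UNIV S"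
  define C1 where "C1 = {V::'r list \<times> 'r list \<Rightarrow> real. \<forall>r. r \<in> D \<longrightarrow> (\<Sum>s\<in>D. V (s, r)) = 1}"
  define C2 where "C2 = {V::'r list \<times> 'r list \<Rightarrow> real. \<forall>x. (neighboring n (fst x) (fst (snd x)) \<and> snd (snd x) \<in> D) \<longrightarrow>
      (\<theta> * V (snd (snd x), fst (snd x)) \<le> V (snd (snd x), fst x) \<and> V (snd (snd x), fst x) \<le> V (snd (snd x), fst (snd x)) / \<theta>)}"
  define C where "C = K \<inter> (C1 \<inter> C2)"
  have "compactin (product_topology (\<lambda>_. euclidean) UNIV) K"
    unfolding K_def by (subst compactin_PiE) (auto simp: S_def)
  then have cK: "compact K" by (simp add: euclidean_product_topology)
  have clC1: "closed C1" unfolding C1_def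
    by (intro closed_Collect_all_imp closed_Collect_eq continuous_intros cont_eval)
  have clC2: "closed C2" unfolding C2_def
    by (intro closed_Collect_all_imp closed_Collect_conj closed_Collect_le continuous_intros cont_eval) (use th0 in auto)
  have cC: "compact C" unfolding C_def using cK clC1 clC2 by (intro compact_Int_closed closed_Int)
  define V0 where "V0 = (\<lambda>x::'r list \<times> 'r list. if x \<in> D \<times> D then 1 / real (card D) else 0)"
  have "V0 \<in> C"
  proof -
    have "V0 \<in> K" unfolding K_def S_def V0_def using cD by (auto simp: PiE_iff)
    moreover have "V0 \<in> C1" unfolding C1_def V0_def using cD by auto
    moreover have "V0 \<in> C2"
    proof -
      have i1: "\<theta> * (1 / real (card D)) \<le> 1 / real (card D)"
        using th1 cD by (simp add: divide_right_mono)
      have i2: "1 / real (card D) \<le> (1 / real (card D)) / \<theta>"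
        using th0 th1 cD by (simp add: le_divide_eq)
      show ?thesis unfolding C2_def V0_def using neighboring_db i1 i2
        by (auto simp: D_def)
    qed
    ultimately show ?thesis unfolding C_def by simp
  qed
  then have neC: "C \<noteq> {}" by auto
  define f where "f = (\<lambda>V::'r list \<times> 'r list \<Rightarrow> real. distortion n p F (\<lambda>s r. V (s, r)))"
  have cf: "continuous_on C f" unfolding f_def distortion_def
    by (intro continuous_intros continuous_on_subset[OF cont_eval]) auto
  obtain Vs where Vs: "Vs \<in> C" "\<And>V. V \<in> C \<Longrightarrow> f Vs \<le> f V"
    using continuous_attains_inf[OF cC neC cf] by blast
  define W0 where "W0 = (\<lambda>s r. Vs (s, r))"
  have VsK: "Vs \<in> K" "Vs \<in> C1" "Vs \<in> C2" using Vs(1) unfolding C_def by auto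
  have m: "mechanism n W0" unfolding mechanism_def
  proof (intro ballI conjI)
    fix r s :: "'r list" assume r: "r \<in> databases n" and s: "s \<in> databases n"
    have "Vs (s, r) \<in> S (s, r)" using VsK(1) unfolding K_def by (simp add: PiE_iff)
    then show "0 \<le> W0 s r" using r s unfolding S_def D_def W0_def by auto
  next
    fix r :: "'r list" assume "r \<in> databases n"
    then show "(\<Sum>s\<in>databases n. W0 s r) = 1" using VsK(2) unfolding C1_def D_def W0_def by auto
  qed
  have dp: "\<forall>a a' b. neighboring n a a' \<longrightarrow> b \<in> databases n \<longrightarrow> \<theta> * W0 b a' \<le> W0 b a \<and> W0 b a \<le> W0 b a' / \<theta>"
  proof (intro allI impI)
    fix a a' b :: "'r list" assume "neighboring n a a'" "b \<in> databases n"
    then show "\<theta> * W0 b a' \<le> W0 b a \<and> W0 b a \<le> W0 b a' / \<theta>"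
      using VsK(3) unfolding C2_def W0_def D_def by (auto dest!: spec[of _ "(a, a', b)"])
  qed
  have opt: "distortion n p F W0 \<le> distortion n p F U" if U: "mechanism n U" "is_DP n \<theta> U" for U
  proof -
    define VU where "VU = (\<lambda>x. if x \<in> D \<times> D then U (fst x) (snd x) else 0)"
    have VUS: "VU x \<in> S x" for x
    proof (cases "x \<in> D \<times> D")
      case True
      obtain s r where x: "x = (s, r)" by (cases x)
      have s: "s \<in> D" and r: "r \<in> D" using True x by auto
      have nn: "\<forall>s\<in>D. 0 \<le> U s r" and sm: "(\<Sum>s\<in>D. U s r) = 1"
        using U(1) r unfolding mechanism_def D_def by auto
      have "U s r \<le> (\<Sum>s\<in>D. U s r)" using member_le_sum[of s D "\<lambda>s. U s r"] nn s finD by auto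
      then show ?thesis using sm nn s True x unfolding VU_def S_def by auto
    next
      case False
      then show ?thesis unfolding VU_def S_def by auto
    qed
    have "VU \<in> K" unfolding K_def using VUS by (simp add: PiE_iff)
    moreover have "VU \<in> C1" unfolding C1_def VU_def using U(1) unfolding mechanism_def D_def by auto
    moreover have "VU \<in> C2" unfolding C2_def
    proof (intro CollectI allI impI)
      fix x :: "'r list \<times> 'r list \<times> 'r list"
      assume hx: "neighboring n (fst x) (fst (snd x)) \<and> snd (snd x) \<in> D"
      obtain a a' b where x: "x = (a, a', b)" by (cases x) auto
      have nb: "neighboring n a a'" and b: "b \<in> D" using hx x by auto
      have a: "a \<in> D" "a' \<in> D" using neighboring_db[OF nb] by (auto simp: D_def)
      have "\<theta> * U b a' \<le> U b a \<and> U b a \<le> U b a' / \<theta>"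
        using U(2) neighboring_sym[OF nb] b unfolding is_DP_def D_def by auto
      then show "\<theta> * VU (snd (snd x), fst (snd x)) \<le> VU (snd (snd x), fst x) \<and>
          VU (snd (snd x), fst x) \<le> VU (snd (snd x), fst (snd x)) / \<theta>"
        using a b x unfolding VU_def by simp
    qed
    ultimately have "VU \<in> C" unfolding C_def by simp
    then have "f Vs \<le> f VU" using Vs(2) by simp
    moreover have "f VU = distortion n p F U" unfolding f_def distortion_def VU_def D_def
      by (intro sum.cong refl) (auto simp: D_def)
    moreover have "f Vs = distortion n p F W0" unfolding f_def W0_def by simp
    ultimately show ?thesis by simp
  qed
  show ?thesis using m dp opt by blast
qed

theorem lemma1:
  fixes n :: nat and \<theta> :: real and p :: "'r::finite \<Rightarrow> real"
    and F :: "('r \<Rightarrow> nat) \<Rightarrow> ('r \<Rightarrow> nat) \<Rightarrow> real"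
  assumes "0 < \<theta>" and "\<theta> < 1"
    and "\<forall>a. 0 \<le> p a" and "(\<Sum>a\<in>UNIV. p a) = 1"
    and "\<forall>h\<in>hist_space n. \<forall>g\<in>hist_space n. 0 \<le> F h g"
  shows "\<exists>W. mechanism n W
     \<and> (\<forall>a\<in>databases n. \<forall>a'\<in>databases n. hist a = hist a' \<longrightarrow>
           (\<forall>b\<in>databases n. W b a = W b a'))
     \<and> (\<forall>a a' b. neighboring n a a' \<longrightarrow> b \<in> databases n \<longrightarrow>
           \<theta> * W b a' \<le> W b a \<and> W b a \<le> W b a' / \<theta>)
     \<and> (\<forall>U. mechanism n U \<and> is_DP n \<theta> U \<longrightarrow> distortion n p F W \<le> distortion n p F U)"
proof -
  obtain W0 :: "'r list \<Rightarrow> 'r list \<Rightarrow> real" where W0: "mechanism n W0"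
     "\<forall>a a' b. neighboring n a a' \<longrightarrow> b \<in> databases n \<longrightarrow> \<theta> * W0 b a' \<le> W0 b a \<and> W0 b a \<le> W0 b a' / \<theta>"
     "\<forall>U. mechanism n U \<and> is_DP n \<theta> U \<longrightarrow> distortion n p F W0 \<le> distortion n p F U"
    using exists_opt[OF assms(1,2)] by blast
  define W where "W = (\<lambda>b a. (\<Sum>\<sigma>\<in>{\<sigma>. \<sigma> permutes {..<n}}. W0 b (permute_list \<sigma> a)) / real (fact n))"
  have s1: "mechanism n W"
    and s2: "\<forall>a\<in>databases n. \<forall>a'\<in>databases n. hist a = hist a' \<longrightarrow> (\<forall>b\<in>databases n. W b a = W b a')"
    and s3: "\<forall>a a' b. neighboring n a a' \<longrightarrow> b \<in> databases n \<longrightarrow> \<theta> * W b a' \<le> W b a \<and> W b a \<le> W b a' / \<theta>"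
    and s4: "distortion n p F W = distortion n p F W0"
    unfolding W_def by (rule symmetrize[OF assms(1) W0(1,2)])+
  have s5: "\<forall>U. mechanism n U \<and> is_DP n \<theta> U \<longrightarrow> distortion n p F W \<le> distortion n p F U"
    using W0(3) s4 by simp
  show ?thesis using s1 s2 s3 s5 by blast
qed

end
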